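(* Let $x\in\mathbb{R}^n$, $d_{\max}>0$, $\alpha>0$ and $\Lambda>0$. Let $\mathcal{D}=\{d_1,\ldots,d_p\}\subset\mathbb{R}^n$ be a $\Lambda$-positive spanning set for $B(x,\alpha)$ such that $\|d_i\|\le d_{\max}\alpha$ for all $i=1,\ldots,p$. Then $\operatorname{cm}(\mathcal{D})\ge \kappa$, where $\kappa:=\frac{1}{d_{\max}\Lambda}$.
   Context: $\|\cdot\|$ is the Euclidean norm and $B(y,r)=\{z\in\mathbb{R}^n:\|z-y\|\le r\}$. Given $x\in\mathbb{R}^n$, $\alpha>0$ and $\Lambda>0$, a set $\{d_1,\ldots,d_p\}\subset\mathbb{R}^n$ is a $\Lambda$-positive spanning set for $B(x,\alpha)$ if for every $v\in B(0,\alpha)$ there exists $c(v)\in\mathbb{R}^p$ with $c(v)\ge 0$ componentwise such that $v=\sum_{i=1}^p c_i(v)d_i$ and $\sum_{i=1}^p c_i(v)\le\Lambda$. The cosine measure of a finite set $\mathcal{D}\subset\mathbb{R}^n$ is $\operatorname{cm}(\mathcal{D}):=\min_{v\neq 0}\max_{d\in\mathcal{D},\, d\neq 0}\frac{d^Tv}{\|d\|\,\|v\|}$. *)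

theory Defs
  imports "HOL-Analysis.Analysis"
begin

definition lambda_pss :: "real \<Rightarrow> 'a::euclidean_space \<Rightarrow> real \<Rightarrow> (nat \<Rightarrow> 'a) \<Rightarrow> nat \<Rightarrow> bool" where
  "lambda_pss \<Lambda> x \<alpha> d p \<longleftrightarrow>
     (\<forall>v \<in> cball 0 \<alpha>. \<exists>c :: nat \<Rightarrow> real.
        (\<forall>i<p. c i \<ge> 0) \<and> v = (\<Sum>i<p. c i *\<^sub>R d i) \<and> (\<Sum>i<p. c i) \<le> \<Lambda>)"

definition cosine_measure :: "'a::euclidean_space set \<Rightarrow> real" where
  "cosine_measure D = (INF v \<in> - {0}. Max {(d \<bullet> v) / (norm d * norm v) | d. d \<in> D \<and> d \<noteq> 0})"

end

theory Submission
  imports Defs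
begin

theorem lemma3p2:
  fixes x :: "'a::euclidean_space" and d :: "nat \<Rightarrow> 'a" and p :: nat
    and dmax \<alpha> \<Lambda> :: real
  assumes "dmax > 0" and "\<alpha> > 0" and "\<Lambda> > 0"
    and "lambda_pss \<Lambda> x \<alpha> d p"
    and "\<forall>i<p. norm (d i) \<le> dmax * \<alpha>"
  shows "cosine_measure (d ` {..<p}) \<ge> 1 / (dmax * \<Lambda>)"
proof -
  note A = assms
  have key: "1 / (dmax * \<Lambda>) \<le> Max {(e \<bullet> v) / (norm e * norm v) | e. e \<in> d ` {..<p} \<and> e \<noteq> 0}"
    if v0: "v \<noteq> 0" for v
  proof -
    define S where "S = {(e \<bullet> v) / (norm e * norm v) | e. e \<in> d ` {..<p} \<and> e \<noteq> 0}"
    define u where "u = v /\<^sub>R norm v"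
    have nv: "norm v > 0" using v0 by simp
    have nu: "norm u = 1" using v0 by (simp add: u_def)
    define w where "w = \<alpha> *\<^sub>R u"
    have "w \<in> cball 0 \<alpha>" using nu A(2) by (simp add: w_def)
    then obtain c where c0: "\<forall>i<p. c i \<ge> 0" and wc: "w = (\<Sum>i<p. c i *\<^sub>R d i)"
        and cs: "(\<Sum>i<p. c i) \<le> \<Lambda>"
      using A(4) unfolding lambda_pss_def by blast
    have fin: "finite S" unfolding S_def by simp
    have ne: "S \<noteq> {}"
    proof
      assume "S = {}"
      then have "\<forall>i<p. d i = 0" unfolding S_def by auto
      then have "w = 0" using wc by simp
      then show False using nu A(2) by (simp add: w_def)
    qed
    define M where "M = Max S"
    have bound: "d i \<bullet> u \<le> max M 0 * norm (d i)" if i: "i < p" for i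
    proof (cases "d i = 0")
      case True then show ?thesis by simp
    next
      case False
      have "(d i \<bullet> v) / (norm (d i) * norm v) \<in> S" unfolding S_def using i False by blast
      then have "(d i \<bullet> v) / (norm (d i) * norm v) \<le> M" unfolding M_def using fin by simp
      moreover have "(d i \<bullet> v) / (norm (d i) * norm v) = (d i \<bullet> u) / norm (d i)"
        by (simp add: u_def divide_simps)
      ultimately have "(d i \<bullet> u) / norm (d i) \<le> M" by simp
      then have "d i \<bullet> u \<le> M * norm (d i)" using False by (simp add: divide_simps)
      also have "\<dots> \<le> max M 0 * norm (d i)" by (simp add: mult_right_mono)
      finally show ?thesis .
    qed
    have "\<alpha> = w \<bullet> u" using nu by (simp add: w_def power2_norm_eq_inner[symmetric])
    also have "\<dots> = (\<Sum>i<p. c i * (d i \<bullet> u))" by (simp add: wc inner_sum_left)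
    also have "\<dots> \<le> (\<Sum>i<p. c i * (max M 0 * (dmax * \<alpha>)))"
    proof (rule sum_mono)
      fix i assume "i \<in> {..<p}"
      then have i: "i < p" by simp
      have "d i \<bullet> u \<le> max M 0 * (dmax * \<alpha>)"
        using bound[OF i] A(5) i mult_left_mono[of "norm (d i)" "dmax * \<alpha>" "max M 0"] by force
      then show "c i * (d i \<bullet> u) \<le> c i * (max M 0 * (dmax * \<alpha>))"
        using c0 i by (simp add: mult_left_mono)
    qed
    also have "\<dots> = (\<Sum>i<p. c i) * (max M 0 * (dmax * \<alpha>))" by (simp add: sum_distrib_right)
    also have "\<dots> \<le> \<Lambda> * (max M 0 * (dmax * \<alpha>))"
      using cs A(1,2) by (intro mult_right_mono) auto
    finally have "\<alpha> \<le> \<Lambda> * (max M 0 * (dmax * \<alpha>))" .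
    then have "1 \<le> \<Lambda> * dmax * max M 0" using A(2)
      by (metis (no_types, lifting) ab_semigroup_mult_class.mult_ac(1) mult.commute mult_le_cancel_right1 not_le)
    moreover have "M > 0"
    proof (rule ccontr)
      assume "\<not> M > 0" then have "max M 0 = 0" by simp
      with \<open>1 \<le> \<Lambda> * dmax * max M 0\<close> show False by simp
    qed
    ultimately have "1 \<le> \<Lambda> * dmax * M" by simp
    then have "1 / (dmax * \<Lambda>) \<le> M" using A(1,3)
      by (simp add: divide_simps mult.commute mult.left_commute)
    then show ?thesis unfolding M_def S_def by linarith
  qed
  have "(- {0::'a}) \<noteq> {}"
    using nonzero_Basis SOME_Basis by blast
  then show ?thesis unfolding cosine_measure_def
    by (intro cINF_greatest) (auto intro: key)
qed

end
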